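(* Let $C_5 \rtimes_4 C_2$ be the group generated by $x, y$ with relations $x^2 = 1$, $y^5 = 1$, $yx = xy^4$, and let $H = \langle y \rangle$. Let $S$ be a sequence in $C_5 \rtimes_4 C_2$ with $|S| = 5$ that is free of product-$1$ subsequences. Then $S$ contains at least one element of $H$.
   Context: A sequence in a finite group $G$ is a finite list of elements of $G$, repetition allowed. A non-empty subsequence $(g_{n_1},\dots,g_{n_k})$ is a product-$1$ subsequence if $g_{\sigma(n_1)}\cdots g_{\sigma(n_k)} = 1$ for some permutation $\sigma$ of $\{n_1,\dots,n_k\}$; $S$ is free of product-$1$ subsequences if it has no such subsequence. *)

theory Defs
  imports "HOL-Algebra.Algebra"
begin

text \<open>The pair (a,b) with a in {0,1}, b in {0..4} stands for x^a y^b.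
  Since y^b x^c = x^c y^(b*4^c), we get x^a y^b x^c y^d = x^(a+c) y^(b*4^c + d).\<close>

definition SD10 :: "(nat \<times> nat) monoid" where
  "SD10 = \<lparr> carrier = {0..<2} \<times> {0..<5},
            monoid.mult = (\<lambda>(a,b) (c,d). ((a + c) mod 2, (b * 4 ^ c + d) mod 5)),
            monoid.one = (0, 0) \<rparr>"

definition gx :: "nat \<times> nat" where "gx = (1, 0)"
definition gy :: "nat \<times> nat" where "gy = (0, 1)"

definition H :: "(nat \<times> nat) set" where "H = generate SD10 {gy}"

definition gprod :: "('a, 'b) monoid_scheme \<Rightarrow> 'a list \<Rightarrow> 'a" where
  "gprod G xs = foldr (\<lambda>a b. a \<otimes>\<^bsub>G\<^esub> b) xs \<one>\<^bsub>G\<^esub>"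

text \<open>S has a product-1 subsequence: a nonempty set of indices, listed in some
  order (a permutation of the subsequence), whose product is 1.\<close>
definition has_product_one_subseq :: "('a, 'b) monoid_scheme \<Rightarrow> 'a list \<Rightarrow> bool" where
  "has_product_one_subseq G S \<longleftrightarrow>
     (\<exists>ns. ns \<noteq> [] \<and> distinct ns \<and> set ns \<subseteq> {..<length S} \<and>
           gprod G (map (\<lambda>i. S ! i) ns) = \<one>\<^bsub>G\<^esub>)"

definition product_one_free :: "('a, 'b) monoid_scheme \<Rightarrow> 'a list \<Rightarrow> bool" where
  "product_one_free G S \<longleftrightarrow> \<not> has_product_one_subseq G S"

lemma SD10_relations:
  "gx \<otimes>\<^bsub>SD10\<^esub> gx = \<one>\<^bsub>SD10\<^esub>"
  "gy [^]\<^bsub>SD10\<^esub> (5::nat) = \<one>\<^bsub>SD10\<^esub>"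
  "gy \<otimes>\<^bsub>SD10\<^esub> gx = gx \<otimes>\<^bsub>SD10\<^esub> (gy [^]\<^bsub>SD10\<^esub> (4::nat))"
  proof -
  have p: "gy [^]\<^bsub>SD10\<^esub> (n::nat) = (0, n mod 5)" for n
    by (induction n) (simp_all add: SD10_def gy_def mod_Suc)
  show "gx \<otimes>\<^bsub>SD10\<^esub> gx = \<one>\<^bsub>SD10\<^esub>" by (simp add: SD10_def gx_def)
  show "gy [^]\<^bsub>SD10\<^esub> (5::nat) = \<one>\<^bsub>SD10\<^esub>" using p[of 5] by (simp add: SD10_def)
  show "gy \<otimes>\<^bsub>SD10\<^esub> gx = gx \<otimes>\<^bsub>SD10\<^esub> (gy [^]\<^bsub>SD10\<^esub> (4::nat))"
    unfolding p by (simp add: SD10_def gx_def gy_def)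
qed

end

theory Submission
  imports Defs
begin

lemma zero_in_H: "b < 5 \<Longrightarrow> (0, b) \<in> H"
proof (induction b)
  case 0
  then show ?case unfolding H_def using generate.one[of SD10 "{gy}"] by (simp add: SD10_def)
next
  case (Suc b)
  have "gy \<otimes>\<^bsub>SD10\<^esub> (0, b) \<in> H"
  proof -
    have "gy \<in> H" unfolding H_def by (rule generate.incl) simp
    moreover have "(0, b) \<in> H" using Suc by simp
    ultimately show ?thesis unfolding H_def by (rule generate.eng)
  qed
  moreover have "gy \<otimes>\<^bsub>SD10\<^esub> (0, b) = (0, Suc b)" using Suc by (simp add: SD10_def gy_def)
  ultimately show ?case by simp
qed

lemma mm: "((x::nat) * 4 + x mod 5) mod 5 = 0"
proof -
  have "(x * 4 + x mod 5) mod 5 = (x * 4 + x) mod 5" by (simp add: mod_add_right_eq)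
  also have "x * 4 + x = x * 5" by simp
  finally show ?thesis by simp
qed

theorem proposition1:
  fixes S :: "(nat \<times> nat) list"
  assumes "set S \<subseteq> carrier SD10"
    and "length S = 5"
    and "product_one_free SD10 S"
  shows "\<exists>s\<in>set S. s \<in> H"
proof (rule ccontr)
  assume nH: "\<not> (\<exists>s\<in>set S. s \<in> H)"
  define f where "f i = snd (S ! i)" for i
  have Si: "S ! i = (1, f i)" and fi: "f i < 5" if "i < 5" for i
  proof -
    have m: "S ! i \<in> set S" using that assms(2) by simp
    hence c: "S ! i \<in> {0..<2} \<times> {0..<5}" using assms(1) by (auto simp: SD10_def)
    have "fst (S ! i) \<noteq> 0"
    proof
      assume z: "fst (S ! i) = 0"
      have "S ! i = (0, snd (S ! i))" using z by (cases "S ! i") auto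
      moreover have "snd (S ! i) < 5" using c by auto
      ultimately have "S ! i \<in> H" using zero_in_H by metis
      thus False using nH m by blast
    qed
    thus "S ! i = (1, f i)" using c unfolding f_def by (cases "S ! i") auto
    show "f i < 5" using c unfolding f_def by auto
  qed
  have np: "\<not> (ns \<noteq> [] \<and> distinct ns \<and> set ns \<subseteq> {..<5} \<and>
           gprod SD10 (map (\<lambda>i. S ! i) ns) = \<one>\<^bsub>SD10\<^esub>)" for ns
    using assms(2,3) unfolding product_one_free_def has_product_one_subseq_def by auto
  have inj: "inj_on f {..<5}"
  proof (rule inj_onI, rule ccontr)
    fix i j assume ij: "i \<in> {..<5}" "j \<in> {..<5}" "f i = f j" "i \<noteq> j"
    have "gprod SD10 (map (\<lambda>i. S ! i) [i, j]) = \<one>\<^bsub>SD10\<^esub>"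
      using ij Si[of i] Si[of j] by (simp add: gprod_def SD10_def mm)
    thus False using np[of "[i,j]"] ij by auto
  qed
  have "f ` {..<5} \<subseteq> {..<5}" using fi by auto
  moreover have "card (f ` {..<5}) = card {..<(5::nat)}" using inj by (rule card_image)
  ultimately have im: "f ` {..<5} = {..<5}"
    by (intro card_subset_eq) auto
  have "(0::nat) \<in> f ` {..<5}" unfolding im by simp
  then obtain i0 where i0: "i0 < 5" "f i0 = 0" by auto
  have "(1::nat) \<in> f ` {..<5}" unfolding im by simp
  then obtain i1 where i1: "i1 < 5" "f i1 = 1" by auto
  have "(2::nat) \<in> f ` {..<5}" unfolding im by simp
  then obtain i2 where i2: "i2 < 5" "f i2 = 2" by auto
  have "(3::nat) \<in> f ` {..<5}" unfolding im by simp
  then obtain i3 where i3: "i3 < 5" "f i3 = 3" by auto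
  have d: "distinct [i0, i1, i3, i2]" using i0 i1 i2 i3 by auto
  have mp: "map (\<lambda>i. S ! i) [i0, i1, i3, i2] = [(1,0),(1,1),(1,3),(1,2)]"
    using Si[OF i0(1)] Si[OF i1(1)] Si[OF i2(1)] Si[OF i3(1)] i0 i1 i2 i3 by simp
  have "gprod SD10 (map (\<lambda>i. S ! i) [i0, i1, i3, i2]) = \<one>\<^bsub>SD10\<^esub>"
    unfolding mp by (simp add: gprod_def SD10_def)
  thus False using np[of "[i0, i1, i3, i2]"] d i0 i1 i2 i3 by auto
qed

end
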